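(* Let $\alpha=(a,\alpha_1,\dots,\alpha_r,\varepsilon,\alpha_{r+2},\dots,\alpha_n)$ be an $\tilde{\mathbb N}$-composition, where $r\in\mathbb N$, $a,\alpha_1,\dots,\alpha_r$ are positive integers and $\alpha_{r+2},\dots,\alpha_n\in\{\varepsilon,1,2,\dots\}$. Let $I$ be the ideal of $\mathrm{WCQSym}$ generated by $B_\varepsilon=\{M_\gamma:\gamma\in\mathcal C_\varepsilon\}$. Then $$M_\alpha+M_{(a,\alpha_1,\dots,\alpha_r,\alpha_{r+2},\dots,\alpha_n)}\in I.$$
   Context: $\tilde{\mathbb N}=\mathbb N\cup\{\varepsilon\}$ with $0+\varepsilon=\varepsilon+\varepsilon=\varepsilon$ and $n+\varepsilon=n$ for integers $n\ge1$. $\mathbf{k}$ is a commutative ring containing $\mathbb Q$; $\mathbf{k}[[X]]_{\tilde{\mathbb N}}$, $X=\{x_1<x_2<\cdots\}$, is the algebra of possibly infinite linear combinations of formal monomials $\prod x_i^{f(x_i)}$ with $f$ finitely supported $\tilde{\mathbb N}$-valued, multiplied by adding exponents in $\tilde{\mathbb N}$. An $\tilde{\mathbb N}$-composition is a finite (possibly empty) sequence of elements of $\{\varepsilon,1,2,\dots\}$; $M_{(\gamma_1,\dots,\gamma_k)}=\sum_{1\le i_1<\cdots<i_k}x_{i_1}^{\gamma_1}\cdots x_{i_k}^{\gamma_k}$, $M_\emptyset=1$, and $\mathrm{WCQSym}$ is their $\mathbf k$-span, a subalgebra of $\mathbf{k}[[X]]_{\tilde{\mathbb N}}$. $\mathcal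 C_\varepsilon$ denotes the set of $\tilde{\mathbb N}$-compositions whose first entry is $\varepsilon$. *)

theory Defs
  imports Main
begin

text \<open>The semiring N-tilde = N plus an extra element eps, with 0+eps = eps+eps = eps
  and n+eps = n for n >= 1.  Num 0 is the integer 0.\<close>
datatype ntilde = Eps | Num nat

fun nadd :: "ntilde \<Rightarrow> ntilde \<Rightarrow> ntilde" where
  "nadd (Num m) (Num n) = Num (m + n)"
| "nadd Eps Eps = Eps"
| "nadd Eps (Num n) = (if n = 0 then Eps else Num n)"
| "nadd (Num n) Eps = (if n = 0 then Eps else Num n)"

text \<open>Exponent vectors: the variables are x_0 < x_1 < ... (indexed by nat);
  a formal monomial is a finitely supported function nat => ntilde
  (support = positions with exponent different from Num 0).\<close>
type_synonym expo = "nat \<Rightarrow> ntilde"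

definition fin_supp :: "expo \<Rightarrow> bool" where
  "fin_supp f \<longleftrightarrow> finite {i. f i \<noteq> Num 0}"

definition expo_add :: "expo \<Rightarrow> expo \<Rightarrow> expo" where
  "expo_add p q = (\<lambda>i. nadd (p i) (q i))"

text \<open>Elements of k[[X]]_Ntilde: coefficient functions on formal monomials
  (the coefficient of a non finitely supported exponent is meaningless; all
  series considered below vanish there).\<close>
type_synonym 'k ser = "expo \<Rightarrow> 'k"

definition ser_add :: "'k::comm_ring_1 ser \<Rightarrow> 'k ser \<Rightarrow> 'k ser" where
  "ser_add f g = (\<lambda>m. f m + g m)"

definition ser_mult :: "'k::comm_ring_1 ser \<Rightarrow> 'k ser \<Rightarrow> 'k ser" where
  "ser_mult f g = (\<lambda>m. if fin_supp m then
      (\<Sum>(p, q) \<in> {(p, q). expo_add p q = m}. f p * g q) else 0)"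

definition is_comp :: "ntilde list \<Rightarrow> bool" where
  "is_comp \<gamma> \<longleftrightarrow> (\<forall>e \<in> set \<gamma>. e \<noteq> Num 0)"

text \<open>The monomial x_{i_1}^{g_1} ... x_{i_k}^{g_k}.\<close>
definition expo_of :: "nat list \<Rightarrow> ntilde list \<Rightarrow> expo" where
  "expo_of is \<gamma> = (\<lambda>x. case map_of (zip is \<gamma>) x of None \<Rightarrow> Num 0 | Some e \<Rightarrow> e)"

definition Mq :: "ntilde list \<Rightarrow> 'k::comm_ring_1 ser" where
  "Mq \<gamma> = (\<lambda>m. if (\<exists>is. length is = length \<gamma> \<and> sorted_wrt (<) is \<and> m = expo_of is \<gamma>)
               then 1 else 0)"

definition WCQSym :: "'k::comm_ring_1 ser set" where
  "WCQSym = {f. \<exists>S c. finite S \<and> (\<forall>\<gamma>\<in>S. is_comp \<gamma>) \<and>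
                  f = (\<lambda>m. \<Sum>\<gamma>\<in>S. c \<gamma> * Mq \<gamma> m)}"

definition C_eps :: "ntilde list set" where
  "C_eps = {\<gamma>. is_comp \<gamma> \<and> \<gamma> \<noteq> [] \<and> hd \<gamma> = Eps}"

definition ideal_gen :: "'k::comm_ring_1 ser set \<Rightarrow> 'k ser set \<Rightarrow> 'k ser set" where
  "ideal_gen A B = {x. \<exists>(n::nat) a b. (\<forall>i<n. a i \<in> A \<and> b i \<in> B) \<and>
                        x = (\<lambda>m. \<Sum>i<n. ser_mult (a i) (b i) m)}"

end

theory Submission
  imports Defs
begin


lemma nadd_zero_iff: "nadd x y = Num 0 \<longleftrightarrow> x = Num 0 \<and> y = Num 0"
  by (cases x; cases y) auto

lemma nadd_0_left[simp]: "nadd (Num 0) y = y"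
  by (cases y) auto

lemma nadd_0_right[simp]: "nadd x (Num 0) = x"
  by (cases x) auto

lemma nadd_Eps_right: "x \<noteq> Num 0 \<Longrightarrow> nadd x Eps = x"
  by (cases x) auto

fun qsh :: "ntilde list \<Rightarrow> ntilde list \<Rightarrow> ntilde list list" where
  "qsh [] v = [v]"
| "qsh u [] = [u]"
| "qsh (x#u) (y#v) = map ((#) x) (qsh u (y#v)) @ map ((#) y) (qsh (x#u) v)
      @ map ((#) (nadd x y)) (qsh u v)"

lemma qsh_Nil2[simp]: "qsh u [] = [u]"
  by (cases u) auto

lemma is_comp_Cons[simp]: "is_comp (x#u) \<longleftrightarrow> x \<noteq> Num 0 \<and> is_comp u"
  by (auto simp: is_comp_def)

lemma is_comp_Nil[simp]: "is_comp []" by (simp add: is_comp_def)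

lemma is_comp_append[simp]: "is_comp (u @ v) \<longleftrightarrow> is_comp u \<and> is_comp v"
  by (auto simp: is_comp_def)

lemma qsh_comp_all: "is_comp u \<Longrightarrow> is_comp v \<Longrightarrow> \<forall>w\<in>set (qsh u v). is_comp w"
proof (induction u v rule: qsh.induct)
  case (3 x u y v)
  have xy: "x \<noteq> Num 0" "y \<noteq> Num 0" and cu: "is_comp u" and cv: "is_comp v"
    using "3.prems" by auto
  have a: "\<forall>w\<in>set (qsh u (y#v)). is_comp w" using "3.IH"(1) cu xy cv by simp
  have b: "\<forall>w\<in>set (qsh (x#u) v). is_comp w" using "3.IH"(2) cu xy cv by simp
  have c: "\<forall>w\<in>set (qsh u v). is_comp w" using "3.IH"(3) cu cv by simp
  have n: "nadd x y \<noteq> Num 0" using xy by (simp add: nadd_zero_iff)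
  show ?case using a b c xy n by (simp only: qsh.simps set_append set_map) auto
qed simp_all

lemma qsh_comp: "is_comp u \<Longrightarrow> is_comp v \<Longrightarrow> w \<in> set (qsh u v) \<Longrightarrow> is_comp w"
  using qsh_comp_all by blast

lemma qsh_nonempty: "u \<noteq> [] \<or> v \<noteq> [] \<Longrightarrow> w \<in> set (qsh u v) \<Longrightarrow> w \<noteq> []"
  by (cases u; cases v) auto

lemma expo_of_Cons: "expo_of (j#js) (c#g) = (expo_of js g)(j := c)"
  by (auto simp: expo_of_def fun_eq_iff)

lemma expo_of_Nil1[simp]: "expo_of [] g = (\<lambda>_. Num 0)"
  by (simp add: expo_of_def)

lemma expo_of_Nil2[simp]: "expo_of ks [] = (\<lambda>_. Num 0)"
  by (simp add: expo_of_def)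

lemma expo_of_notin: "k \<notin> set ks \<Longrightarrow> expo_of ks g k = Num 0"
proof (induction "ks" arbitrary: g)
  case Nil then show ?case by simp
next
  case (Cons j js) then show ?case by (cases g) (auto simp: expo_of_Cons)
qed

lemma expo_of_in: "is_comp g \<Longrightarrow> length ks = length g \<Longrightarrow> k \<in> set ks \<Longrightarrow> expo_of ks g k \<noteq> Num 0"
proof (induction "ks" arbitrary: g)
  case Nil then show ?case by simp
next
  case (Cons j js) then show ?case by (cases g) (auto simp: expo_of_Cons)
qed

lemma Mq_Nil: "Mq [] m = (if m = (\<lambda>_. Num 0) then 1 else 0)"
  by (auto simp: Mq_def)

definition F :: "ntilde list \<Rightarrow> nat \<Rightarrow> ntilde \<Rightarrow> expo \<Rightarrow> 'k::comm_ring_1" where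
  "F u i x p = (if x = Num 0 then Mq u p else if u \<noteq> [] \<and> hd u = x then Mq (tl u) p else 0)"

lemma Mq_step:
  assumes cu: "is_comp u" and z: "\<forall>j\<le>i. p j = Num 0"
  shows "Mq u (p(i:=x)) = (F u i x p :: 'k::comm_ring_1)"
proof (cases "x = Num 0")
  case True
  have "p(i:=x) = p" using z True by (auto simp: fun_eq_iff)
  then show ?thesis using True by (simp add: F_def)
next
  case xnz: False
  show ?thesis
  proof (cases u)
    case Nil
    have "p(i:=x) \<noteq> (\<lambda>_. Num 0)" using xnz by (auto simp: fun_eq_iff dest: spec[of _ i])
    then show ?thesis using Nil xnz by (simp add: Mq_Nil F_def)
  next
    case (Cons c u')
    have cnz: "c \<noteq> Num 0" and cu': "is_comp u'" using cu Cons by auto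
    have L: "(\<exists>ks. length ks = length (c#u') \<and> sorted_wrt (<) ks \<and> p(i:=x) = expo_of ks (c#u'))
       \<longleftrightarrow> (c = x \<and> (\<exists>js. length js = length u' \<and> sorted_wrt (<) js \<and> p = expo_of js u'))"
    proof
      assume "\<exists>ks. length ks = length (c#u') \<and> sorted_wrt (<) ks \<and> p(i:=x) = expo_of ks (c#u')"
      then obtain ks where l0: "length ks = length (c#u')" and s0: "sorted_wrt (<) ks"
        and e0: "p(i:=x) = expo_of ks (c#u')" by blast
      then obtain j js where ij: "ks = j#js" by (cases "ks") auto
      have l: "length js = length u'" using l0 ij by simp
      have s: "sorted_wrt (<) (j#js)" using s0 ij by simp
      have e: "p(i:=x) = (expo_of js u')(j:=c)" using e0 ij by (simp add: expo_of_Cons)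
      have "i \<in> set (j#js)"
      proof (rule ccontr)
        assume "i \<notin> set (j#js)"
        then have "expo_of (j#js) (c#u') i = Num 0" by (rule expo_of_notin)
        moreover have "(p(i:=x)) i = expo_of (j#js) (c#u') i" using e0 ij by simp
        ultimately show False using xnz by simp
      qed
      then have ji: "j \<le> i" using s by auto
      have "j = i"
      proof (rule ccontr)
        assume "j \<noteq> i"
        then have "j < i" using ji by simp
        have "(p(i:=x)) j = c" using e by simp
        then show False using z \<open>j < i\<close> \<open>j \<noteq> i\<close> cnz by simp
      qed
      then have cx: "c = x" using e by (metis fun_upd_same)
      have inot: "i \<notin> set js" using s \<open>j = i\<close> by auto
      have "p = expo_of js u'"
      proof
        fix k show "p k = expo_of js u' k"
        proof (cases "k = i")
          case True
          then show ?thesis using z inot expo_of_notin by auto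
        next
          case False
          then show ?thesis using e \<open>j = i\<close> by (metis fun_upd_other)
        qed
      qed
      then show "c = x \<and> (\<exists>js. length js = length u' \<and> sorted_wrt (<) js \<and> p = expo_of js u')"
        using cx l s by auto
    next
      assume "c = x \<and> (\<exists>js. length js = length u' \<and> sorted_wrt (<) js \<and> p = expo_of js u')"
      then obtain js where cx: "c = x" and l: "length js = length u'" and s: "sorted_wrt (<) js"
        and e: "p = expo_of js u'" by blast
      have "\<forall>k\<in>set js. i < k"
      proof
        fix k assume "k \<in> set js"
        then have "p k \<noteq> Num 0" using e expo_of_in[OF cu' l] by simp
        then show "i < k" using z by (meson not_le)
      qed
      then have "sorted_wrt (<) (i#js)" using s by simp
      moreover have "p(i:=x) = expo_of (i#js) (c#u')" using e cx by (simp add: expo_of_Cons)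
      ultimately show "\<exists>ks. length ks = length (c#u') \<and> sorted_wrt (<) ks \<and> p(i:=x) = expo_of ks (c#u')"
        using l by (intro exI[of _ "i#js"]) simp
    qed
    have "Mq u (p(i:=x)) = (if c = x \<and> (\<exists>js. length js = length u' \<and> sorted_wrt (<) js \<and> p = expo_of js u') then 1 else (0::'k))"
      unfolding Mq_def Cons by (simp only: L)
    then show ?thesis
      unfolding F_def using xnz Cons by (auto simp: Mq_def)
  qed
qed



definition pairsof :: "expo \<Rightarrow> (expo \<times> expo) set" where
  "pairsof m = {(p,q). expo_add p q = m}"

definition splits :: "ntilde \<Rightarrow> (ntilde \<times> ntilde) set" where
  "splits e = {(x,y). nadd x y = e}"

lemma finite_splits: "finite (splits e)"
proof -
  define N where "N = (case e of Num n \<Rightarrow> n | Eps \<Rightarrow> 0)"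
  define X where "X = insert Eps (Num ` {..N})"
  have "splits e \<subseteq> X \<times> X"
  proof
    fix z assume "z \<in> splits e"
    then obtain x y where z: "z = (x,y)" and e: "nadd x y = e" by (auto simp: splits_def)
    show "z \<in> X \<times> X" unfolding z X_def N_def using e
      by (cases x; cases y) (auto split: if_splits)
  qed
  moreover have "finite (X \<times> X)" by (simp add: X_def)
  ultimately show ?thesis by (rule finite_subset)
qed

definition stepmap :: "nat \<Rightarrow> (ntilde \<times> ntilde) \<times> (expo \<times> expo) \<Rightarrow> expo \<times> expo" where
  "stepmap i z = (case z of ((x,y),(p,q)) \<Rightarrow> (p(i:=x), q(i:=y)))"

lemma pairsof_zero_at: "(p,q) \<in> pairsof m \<Longrightarrow> m j = Num 0 \<Longrightarrow> p j = Num 0 \<and> q j = Num 0"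
  by (auto simp: pairsof_def expo_add_def nadd_zero_iff dest: fun_cong[of _ _ j])

lemma pairsof_step:
  assumes "m' i = Num 0"
  shows "pairsof (m'(i:=e)) = stepmap i ` (splits e \<times> pairsof m')"
proof
  show "pairsof (m'(i:=e)) \<subseteq> stepmap i ` (splits e \<times> pairsof m')"
  proof
    fix z assume z: "z \<in> pairsof (m'(i:=e))"
    obtain p q where zpq: "z = (p,q)" by (cases z)
    have e: "expo_add p q = m'(i:=e)" using z zpq by (simp add: pairsof_def)
    have "(p i, q i) \<in> splits e" using fun_cong[OF e, of i] by (simp add: splits_def expo_add_def)
    moreover have "(p(i:=Num 0), q(i:=Num 0)) \<in> pairsof m'"
      unfolding pairsof_def using e assms
      by (auto simp: expo_add_def fun_eq_iff)
    moreover have "z = stepmap i ((p i, q i), (p(i:=Num 0), q(i:=Num 0)))"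
      by (simp add: stepmap_def zpq)
    ultimately show "z \<in> stepmap i ` (splits e \<times> pairsof m')" by blast
  qed
next
  show "stepmap i ` (splits e \<times> pairsof m') \<subseteq> pairsof (m'(i:=e))"
  proof
    fix z assume "z \<in> stepmap i ` (splits e \<times> pairsof m')"
    then obtain x y p q where xy: "nadd x y = e" and pq: "expo_add p q = m'"
      and z: "z = (p(i:=x), q(i:=y))"
      by (auto simp: stepmap_def splits_def pairsof_def)
    show "z \<in> pairsof (m'(i:=e))" using xy pq z
      by (auto simp: pairsof_def expo_add_def fun_eq_iff)
  qed
qed

lemma inj_stepmap:
  assumes "m' i = Num 0"
  shows "inj_on (stepmap i) (splits e \<times> pairsof m')"
proof (rule inj_onI)
  fix z1 z2 assume z1: "z1 \<in> splits e \<times> pairsof m'" and z2: "z2 \<in> splits e \<times> pairsof m'"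
    and eq: "stepmap i z1 = stepmap i z2"
  obtain x1 y1 p1 q1 where a: "z1 = ((x1,y1),(p1,q1))" by (metis prod.exhaust)
  obtain x2 y2 p2 q2 where b: "z2 = ((x2,y2),(p2,q2))" by (metis prod.exhaust)
  have "p1 i = Num 0" "q1 i = Num 0" using pairsof_zero_at[of p1 q1 m' i] z1 a assms by auto
  moreover have "p2 i = Num 0" "q2 i = Num 0" using pairsof_zero_at[of p2 q2 m' i] z2 b assms by auto
  moreover have "p1(i:=x1) = p2(i:=x2)" "q1(i:=y1) = q2(i:=y2)" using eq a b by (auto simp: stepmap_def)
  ultimately show "z1 = z2" unfolding a b
    by (auto simp: fun_eq_iff) (metis fun_upd_apply)+
qed



definition S :: "ntilde list \<Rightarrow> ntilde list \<Rightarrow> expo \<Rightarrow> 'k::comm_ring_1" where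
  "S u v m = (\<Sum>(p,q)\<in>pairsof m. Mq u p * Mq v q)"

lemma sum_if_const: "(\<Sum>z\<in>A. if c then f z else 0) = (if c then sum f A else (0::'k::comm_ring_1))"
  by (cases c) auto

lemma S_step:
  assumes z: "\<forall>j\<le>i. m' j = Num 0" and enz: "e \<noteq> Num 0" and cu: "is_comp u" and cv: "is_comp v"
  shows "(S u v (m'(i:=e)) :: 'k::comm_ring_1) =
     (if u \<noteq> [] \<and> hd u = e then S (tl u) v m' else 0)
   + (if v \<noteq> [] \<and> hd v = e then S u (tl v) m' else 0)
   + (if u \<noteq> [] \<and> v \<noteq> [] \<and> nadd (hd u) (hd v) = e then S (tl u) (tl v) m' else 0)"
proof -
  have mi: "m' i = Num 0" using z by simp
  define G :: "ntilde \<Rightarrow> ntilde \<Rightarrow> 'k" where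
    "G x y = (\<Sum>(p,q)\<in>pairsof m'. F u i x p * F v i y q)" for x y
  have "S u v (m'(i:=e)) = (\<Sum>w\<in>splits e \<times> pairsof m'.
      (case stepmap i w of (p,q) \<Rightarrow> Mq u p * Mq v q) :: 'k)"
    unfolding S_def pairsof_step[of m' i e, OF mi] sum.reindex[OF inj_stepmap[of m' i e, OF mi]] by (simp add: comp_def)
  also have "\<dots> = (\<Sum>(xy)\<in>splits e. \<Sum>(pq)\<in>pairsof m'.
      (case stepmap i (xy,pq) of (p,q) \<Rightarrow> Mq u p * Mq v q))"
    by (simp add: sum.cartesian_product)
  also have "\<dots> = (\<Sum>(x,y)\<in>splits e. G x y)"
  proof (rule sum.cong[OF refl])
    fix xy assume "xy \<in> splits e"
    obtain x y where xy: "xy = (x,y)" by (cases xy)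
    have "(\<Sum>(pq)\<in>pairsof m'. (case stepmap i (xy,pq) of (p,q) \<Rightarrow> Mq u p * Mq v q)) = G x y"
      unfolding G_def
    proof (rule sum.cong[OF refl])
      fix pq assume pq: "pq \<in> pairsof m'"
      obtain p q where pqe: "pq = (p,q)" by (cases pq)
      have "\<forall>j\<le>i. p j = Num 0" "\<forall>j\<le>i. q j = Num 0"
        using pairsof_zero_at[of p q m'] pq pqe z by auto
      then show "(case stepmap i (xy,pq) of (p,q) \<Rightarrow> Mq u p * Mq v q) =
          (case pq of (p,q) \<Rightarrow> F u i x p * F v i y q)"
        by (simp add: pqe xy stepmap_def Mq_step[OF cu] Mq_step[OF cv])
    qed
    then show "(\<Sum>(pq)\<in>pairsof m'. (case stepmap i (xy,pq) of (p,q) \<Rightarrow> Mq u p * Mq v q)) =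
        (case xy of (x,y) \<Rightarrow> G x y)" by (simp add: xy)
  qed
  also have "\<dots> = G e (Num 0) + G (Num 0) e + (\<Sum>(x,y)\<in>{(x,y). x \<noteq> Num 0 \<and> y \<noteq> Num 0 \<and> nadd x y = e}. G x y)"
  proof -
    define T where "T = {(x,y). x \<noteq> Num 0 \<and> y \<noteq> Num 0 \<and> nadd x y = e}"
    have fT: "finite T"
      by (rule finite_subset[OF _ finite_splits[of e]]) (auto simp: T_def splits_def)
    have sp: "splits e = insert (e, Num 0) (insert (Num 0, e) T)"
      by (auto simp: splits_def T_def nadd_zero_iff)
    have "(e, Num 0) \<notin> insert (Num 0, e) T" "(Num 0, e) \<notin> T" using enz by (auto simp: T_def)
    then show ?thesis unfolding sp using fT by (simp add: T_def add.assoc)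
  qed
  also have "G e (Num 0) = (if u \<noteq> [] \<and> hd u = e then S (tl u) v m' else 0)"
    unfolding G_def S_def F_def using enz
    by (cases "u \<noteq> [] \<and> hd u = e") (auto simp: case_prod_beta)
  also have "G (Num 0) e = (if v \<noteq> [] \<and> hd v = e then S u (tl v) m' else 0)"
    unfolding G_def S_def F_def using enz
    by (cases "v \<noteq> [] \<and> hd v = e") (auto simp: case_prod_beta)
  also have "(\<Sum>(x,y)\<in>{(x,y). x \<noteq> Num 0 \<and> y \<noteq> Num 0 \<and> nadd x y = e}. G x y) =
     (if u \<noteq> [] \<and> v \<noteq> [] \<and> nadd (hd u) (hd v) = e then S (tl u) (tl v) m' else 0)"
  proof -
    define T where "T = {(x,y). x \<noteq> Num 0 \<and> y \<noteq> Num 0 \<and> nadd x y = e}"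
    have fT: "finite T"
      by (rule finite_subset[OF _ finite_splits[of e]]) (auto simp: T_def splits_def)
    define c where "c = (if u \<noteq> [] \<and> v \<noteq> [] then S (tl u) (tl v) m' else (0::'k))"
    have "(\<Sum>(x,y)\<in>T. G x y) = (\<Sum>xy\<in>T. if xy = (hd u, hd v) then c else 0)"
    proof (rule sum.cong[OF refl])
      fix xy assume "xy \<in> T"
      then obtain x y where xy: "xy = (x,y)" and nz: "x \<noteq> Num 0" "y \<noteq> Num 0" by (auto simp: T_def)
      have "G x y = (if u \<noteq> [] \<and> hd u = x \<and> v \<noteq> [] \<and> hd v = y then S (tl u) (tl v) m' else 0)"
        unfolding G_def S_def F_def using nz
        by (cases "u \<noteq> [] \<and> hd u = x \<and> v \<noteq> [] \<and> hd v = y") (auto simp: case_prod_beta)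
      then show "(case xy of (x,y) \<Rightarrow> G x y) = (if xy = (hd u, hd v) then c else 0)"
        by (auto simp: xy c_def)
    qed
    also have "\<dots> = (if (hd u, hd v) \<in> T then c else 0)" using fT by (simp add: sum.delta')
    also have "\<dots> = (if u \<noteq> [] \<and> v \<noteq> [] \<and> nadd (hd u) (hd v) = e then S (tl u) (tl v) m' else 0)"
      using cu cv by (cases u; cases v) (auto simp: T_def c_def)
    finally show ?thesis by (simp add: T_def)
  qed
  finally show ?thesis .
qed



definition Qs :: "ntilde list \<Rightarrow> ntilde list \<Rightarrow> expo \<Rightarrow> 'k::comm_ring_1" where
  "Qs u v m = sum_list (map (\<lambda>w. Mq w m) (qsh u v))"

lemma is_comp_tl: "is_comp u \<Longrightarrow> is_comp (tl u)"
  by (cases u) auto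

lemma Mq_upd:
  assumes "\<forall>j\<le>i. m' j = Num 0" "e \<noteq> Num 0" "is_comp w"
  shows "(Mq w (m'(i:=e)) :: 'k::comm_ring_1) = (if w \<noteq> [] \<and> hd w = e then Mq (tl w) m' else 0)"
  using Mq_step[OF assms(3) assms(1), of e] assms(2) by (simp add: F_def)

lemma sum_map_Cons:
  assumes "\<forall>j\<le>i. m' j = Num 0" "e \<noteq> Num 0" "\<forall>w\<in>set L. is_comp w" "c \<noteq> Num 0"
  shows "sum_list (map (\<lambda>w. Mq w (m'(i:=e))) (map ((#) c) L)) =
     (if c = e then sum_list (map (\<lambda>w. Mq w m') L) else (0::'k::comm_ring_1))"
proof -
  have eq: "map (\<lambda>w. Mq w (m'(i:=e))) (map ((#) c) L) = map (\<lambda>w. if c = e then Mq w m' else (0::'k)) L"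
    unfolding map_map comp_def
  proof (rule map_cong[OF refl])
    fix w assume "w \<in> set L"
    then have "is_comp (c#w)" using assms by simp
    then show "Mq (c#w) (m'(i:=e)) = (if c = e then Mq w m' else (0::'k))"
      using Mq_upd[OF assms(1,2) \<open>is_comp (c#w)\<close>] by (simp only: list.sel list.distinct(2) simp_thms)
  qed
  show ?thesis unfolding eq by (cases "c = e") simp_all
qed

lemma Q_step:
  assumes z: "\<forall>j\<le>i. m' j = Num 0" and enz: "e \<noteq> Num 0" and cu: "is_comp u" and cv: "is_comp v"
  shows "(Qs u v (m'(i:=e)) :: 'k::comm_ring_1) =
     (if u \<noteq> [] \<and> hd u = e then Qs (tl u) v m' else 0)
   + (if v \<noteq> [] \<and> hd v = e then Qs u (tl v) m' else 0)
   + (if u \<noteq> [] \<and> v \<noteq> [] \<and> nadd (hd u) (hd v) = e then Qs (tl u) (tl v) m' else 0)"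
proof (cases u)
  case Nil
  then show ?thesis
  proof (cases v)
    case Nil
    then show ?thesis using \<open>u = []\<close> Mq_upd[OF z enz, of "[]"] by (simp add: Qs_def)
  next
    case (Cons d v')
    have "Mq (d#v') (m'(i:=e)) = (if d = e then Mq v' m' else (0::'k))"
      using Mq_upd[OF z enz cv[unfolded Cons]] by (simp only: list.sel list.distinct(2) simp_thms)
    then show ?thesis using \<open>u = []\<close> Cons by (simp add: Qs_def)
  qed
next
  case (Cons c u')
  then show ?thesis
  proof (cases v)
    case Nil
    have "Mq (c#u') (m'(i:=e)) = (if c = e then Mq u' m' else (0::'k))"
      using Mq_upd[OF z enz cu[unfolded \<open>u = c#u'\<close>]] by (simp only: list.sel list.distinct(2) simp_thms)
    then show ?thesis using \<open>u = c#u'\<close> Nil by (simp add: Qs_def)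
  next
    case (Cons d v')
    have c: "c \<noteq> Num 0" "d \<noteq> Num 0" "is_comp u'" "is_comp v'" using cu cv \<open>u = c#u'\<close> Cons by auto
    have n: "nadd c d \<noteq> Num 0" using c by (simp add: nadd_zero_iff)
    have cd: "is_comp (d#v')" "is_comp (c#u')" using c by simp_all
    have q1: "\<forall>w\<in>set (qsh u' (d#v')). is_comp w" using qsh_comp[OF c(3) cd(1)] by blast
    have q2: "\<forall>w\<in>set (qsh (c#u') v'). is_comp w" using qsh_comp[OF cd(2) c(4)] by blast
    have q3: "\<forall>w\<in>set (qsh u' v'). is_comp w" using qsh_comp[OF c(3) c(4)] by blast
    show ?thesis unfolding Qs_def \<open>u = c#u'\<close> Cons
      by (simp only: qsh.simps map_append sum_list_append sum_map_Cons[OF z enz q1 c(1)]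
          sum_map_Cons[OF z enz q2 c(2)] sum_map_Cons[OF z enz q3 n] list.sel list.distinct(2) simp_thms add.assoc)
  qed
qed

lemma Mq_zero: "is_comp u \<Longrightarrow> Mq u (\<lambda>_. Num 0) = (if u = [] then 1 else 0)"
proof (cases u)
  case Nil then show ?thesis by (simp add: Mq_Nil)
next
  case (Cons c u')
  assume cu: "is_comp u"
  have "\<not> (\<exists>ks. length ks = length u \<and> sorted_wrt (<) ks \<and> (\<lambda>_. Num 0) = expo_of ks u)"
  proof
    assume "\<exists>ks. length ks = length u \<and> sorted_wrt (<) ks \<and> (\<lambda>_. Num 0) = expo_of ks u"
    then obtain ks where l: "length ks = length u" and e: "(\<lambda>_. Num 0) = expo_of ks u" by blast
    obtain k ks' where "ks = k # ks'" using l Cons by (cases ks) auto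
    then have "expo_of ks u k \<noteq> Num 0" using expo_of_in[OF cu l] by simp
    moreover have "expo_of ks u k = Num 0" using fun_cong[OF e, of k] by simp
    ultimately show False by simp
  qed
  then show ?thesis unfolding Mq_def using Cons by auto
qed

lemma pairsof_0: "pairsof (\<lambda>_. Num 0) = {(\<lambda>_. Num 0, \<lambda>_. Num 0)}"
  by (auto simp: pairsof_def expo_add_def fun_eq_iff nadd_zero_iff)

lemma sum_list_zeros: "sum_list (map (\<lambda>w. 0::'k::comm_ring_1) L) = 0"
  by (induction L) simp_all

lemma S_Q_zero:
  assumes "is_comp u" "is_comp v"
  shows "(S u v (\<lambda>_. Num 0) :: 'k::comm_ring_1) = Qs u v (\<lambda>_. Num 0)"
proof -
  have L: "Qs u v (\<lambda>_. Num 0) = (if u = [] \<and> v = [] then 1 else (0::'k))"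
  proof (cases "u = [] \<and> v = []")
    case True then show ?thesis by (simp add: Qs_def Mq_Nil)
  next
    case False
    have "\<forall>w\<in>set (qsh u v). (Mq w (\<lambda>_. Num 0) :: 'k) = 0"
      using qsh_nonempty[of u v] qsh_comp[OF assms] False Mq_zero by force
    then have "map (\<lambda>w. Mq w (\<lambda>_. Num 0) :: 'k) (qsh u v) = map (\<lambda>w. 0) (qsh u v)"
      by (intro map_cong[OF refl]) simp
    then have "Qs u v (\<lambda>_. Num 0) = (sum_list (map (\<lambda>w. 0) (qsh u v)) :: 'k)"
      unfolding Qs_def by metis
    also have "\<dots> = 0" by (rule sum_list_zeros)
    finally show ?thesis using False by simp
  qed
  show ?thesis unfolding L S_def pairsof_0 using assms by (simp add: Mq_zero)
qed

lemma Mq_nonfin: "\<not> fin_supp m \<Longrightarrow> Mq w m = 0"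
proof -
  assume nf: "\<not> fin_supp m"
  have "\<not> (\<exists>ks. length ks = length w \<and> sorted_wrt (<) ks \<and> m = expo_of ks w)"
  proof
    assume "\<exists>ks. length ks = length w \<and> sorted_wrt (<) ks \<and> m = expo_of ks w"
    then obtain ks where e: "m = expo_of ks w" by blast
    have "{i. m i \<noteq> Num 0} \<subseteq> set ks" using e expo_of_notin by blast
    then have "fin_supp m" unfolding fin_supp_def using finite_subset by blast
    then show False using nf by simp
  qed
  then show ?thesis by (simp add: Mq_def)
qed

lemma S_Q:
  "fin_supp m \<Longrightarrow> is_comp u \<Longrightarrow> is_comp v \<Longrightarrow> (S u v m :: 'k::comm_ring_1) = Qs u v m"
proof (induction "card {j. m j \<noteq> Num 0}" arbitrary: m u v rule: less_induct)
  case less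
  show ?case
  proof (cases "m = (\<lambda>_. Num 0)")
    case True
    then show ?thesis using S_Q_zero less.prems by simp
  next
    case False
    define D where "D = {j. m j \<noteq> Num 0}"
    have fD: "finite D" using less.prems by (simp add: fin_supp_def D_def)
    have neD: "D \<noteq> {}" using False by (auto simp: D_def fun_eq_iff)
    define i where "i = Min D"
    have iD: "i \<in> D" using fD neD by (simp add: i_def)
    define m' where "m' = m(i := Num 0)"
    define e where "e = m i"
    have enz: "e \<noteq> Num 0" using iD by (simp add: D_def e_def)
    have mm: "m = m'(i := e)" by (simp add: m'_def e_def)
    have z: "\<forall>j\<le>i. m' j = Num 0"
    proof (intro allI impI)
      fix j assume "j \<le> i"
      show "m' j = Num 0"
      proof (cases "j = i")
        case True then show ?thesis by (simp add: m'_def)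
      next
        case False
        have "m j = Num 0"
        proof (rule ccontr)
          assume "m j \<noteq> Num 0"
          then have "j \<in> D" by (simp add: D_def)
          then have "i \<le> j" using fD by (simp add: i_def)
          then show False using \<open>j \<le> i\<close> False by simp
        qed
        then show ?thesis using False by (simp add: m'_def)
      qed
    qed
    have D': "{j. m' j \<noteq> Num 0} = D - {i}" by (auto simp: m'_def D_def)
    have lt: "card {j. m' j \<noteq> Num 0} < card {j. m j \<noteq> Num 0}"
      unfolding D' D_def[symmetric] by (rule card_Diff1_less[OF fD iD])
    have fin': "fin_supp m'" using fD D' by (simp add: fin_supp_def)
    have IH: "\<And>u v. is_comp u \<Longrightarrow> is_comp v \<Longrightarrow> (S u v m' :: 'k) = Qs u v m'"
      using less.hyps[OF lt fin'] by blast
    have cu: "is_comp u" "is_comp (tl u)" "is_comp v" "is_comp (tl v)"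
      using less.prems is_comp_tl by auto
    show ?thesis unfolding mm S_step[OF z enz cu(1) cu(3)] Q_step[OF z enz cu(1) cu(3)]
      by (simp only: IH[OF cu(2) cu(3)] IH[OF cu(1) cu(4)] IH[OF cu(2) cu(4)])
  qed
qed

lemma mult_Mq:
  assumes "is_comp u" "is_comp v"
  shows "ser_mult (Mq u) (Mq v) = (\<lambda>m. (Qs u v m :: 'k::comm_ring_1))"
proof
  fix m
  show "ser_mult (Mq u) (Mq v) m = Qs u v m"
  proof (cases "fin_supp m")
    case True
    then show ?thesis using S_Q[OF True assms] by (simp add: ser_mult_def S_def pairsof_def)
  next
    case False
    then show ?thesis by (simp add: ser_mult_def Qs_def Mq_nonfin)
  qed
qed



abbreviation J :: "'k::comm_ring_1 ser set" where
  "J \<equiv> ideal_gen (WCQSym :: 'k ser set) (Mq ` C_eps)"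

lemma sum_split_nat: fixes h :: "nat \<Rightarrow> 'a::comm_monoid_add" shows "(\<Sum>i<n1 + n2. h i) = (\<Sum>i<n1. h i) + (\<Sum>i<n2. h (i + n1))"
  by (induction n2) (simp_all add: add.commute add.left_commute)

lemma J_zero: "(\<lambda>m. 0) \<in> J"
  unfolding ideal_gen_def by (rule CollectI, rule exI[of _ 0]) simp

lemma J_add:
  fixes f g :: "'k::comm_ring_1 ser"
  assumes "f \<in> J" "g \<in> J"
  shows "(\<lambda>m. f m + g m) \<in> J"
proof -
  obtain n1 :: nat and a1 b1 where 1: "\<forall>i<n1. a1 i \<in> WCQSym \<and> b1 i \<in> Mq ` C_eps"
    "f = (\<lambda>m. \<Sum>i<n1. ser_mult (a1 i) (b1 i) m)"
    using assms(1) unfolding ideal_gen_def by blast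
  obtain n2 :: nat and a2 b2 where 2: "\<forall>i<n2. a2 i \<in> WCQSym \<and> b2 i \<in> Mq ` C_eps"
    "g = (\<lambda>m. \<Sum>i<n2. ser_mult (a2 i) (b2 i) m)"
    using assms(2) unfolding ideal_gen_def by blast
  define a where "a i = (if i < n1 then a1 i else a2 (i - n1))" for i
  define b where "b i = (if i < n1 then b1 i else b2 (i - n1))" for i
  have "\<forall>i<n1+n2. a i \<in> WCQSym \<and> b i \<in> Mq ` C_eps"
  proof (intro allI impI)
    fix i assume i: "i < n1 + n2"
    show "a i \<in> WCQSym \<and> b i \<in> Mq ` C_eps"
    proof (cases "i < n1")
      case True then show ?thesis using 1 by (simp add: a_def b_def)
    next
      case False then have "i - n1 < n2" using i by simp
      then show ?thesis using 2 False by (simp add: a_def b_def)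
    qed
  qed
  moreover have "(\<lambda>m. f m + g m) = (\<lambda>m. \<Sum>i<n1+n2. ser_mult (a i) (b i) m)"
  proof
    fix m
    have "(\<Sum>i<n1+n2. ser_mult (a i) (b i) m) =
        (\<Sum>i<n1. ser_mult (a i) (b i) m) + (\<Sum>i<n2. ser_mult (a (i+n1)) (b (i+n1)) m)"
      by (rule sum_split_nat)
    also have "(\<Sum>i<n1. ser_mult (a i) (b i) m) = f m"
      unfolding 1(2) by (rule sum.cong) (simp_all add: a_def b_def)
    also have "(\<Sum>i<n2. ser_mult (a (i+n1)) (b (i+n1)) m) = g m"
      unfolding 2(2) by (rule sum.cong) (simp_all add: a_def b_def)
    finally show "f m + g m = (\<Sum>i<n1+n2. ser_mult (a i) (b i) m)" by simp
  qed
  ultimately show ?thesis unfolding ideal_gen_def by blast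
qed

lemma WCQSym_neg: "f \<in> WCQSym \<Longrightarrow> (\<lambda>m. - f m) \<in> WCQSym"
proof -
  assume "f \<in> WCQSym"
  then obtain S c where "finite S" "\<forall>\<gamma>\<in>S. is_comp \<gamma>" "f = (\<lambda>m. \<Sum>\<gamma>\<in>S. c \<gamma> * Mq \<gamma> m)"
    unfolding WCQSym_def by blast
  then show ?thesis unfolding WCQSym_def
    by (intro CollectI exI[of _ S] exI[of _ "\<lambda>\<gamma>. - c \<gamma>"]) (simp add: sum_negf)
qed

lemma ser_mult_neg: "ser_mult (\<lambda>m. - f m) g = (\<lambda>m. - ser_mult f g m)"
  by (auto simp: ser_mult_def fun_eq_iff case_prod_beta sum_negf)

lemma J_neg:
  fixes f :: "'k::comm_ring_1 ser"
  assumes "f \<in> J"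
  shows "(\<lambda>m. - f m) \<in> J"
proof -
  obtain n :: nat and a b where 1: "\<forall>i<n. a i \<in> WCQSym \<and> b i \<in> Mq ` C_eps"
    "f = (\<lambda>m. \<Sum>i<n. ser_mult (a i) (b i) m)"
    using assms(1) unfolding ideal_gen_def by blast
  have A: "\<forall>i<n. (\<lambda>m. - a i m) \<in> WCQSym \<and> b i \<in> Mq ` C_eps" using 1 WCQSym_neg by blast
  have B: "(\<lambda>m. - f m) = (\<lambda>m. \<Sum>i<n. ser_mult (\<lambda>m. - a i m) (b i) m)"
    unfolding 1(2) ser_mult_neg by (simp add: sum_negf)
  show ?thesis unfolding ideal_gen_def
    by (rule CollectI, rule exI[of _ n], rule exI[of _ "\<lambda>i m. - a i m"], rule exI[of _ b])
      (use A B in simp)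
qed

lemma J_diff: fixes f g :: "'k::comm_ring_1 ser" shows "f \<in> J \<Longrightarrow> g \<in> J \<Longrightarrow> (\<lambda>m. f m - g m) \<in> J"
  using J_add[OF _ J_neg, of f g] by simp

lemma J_sum_list: fixes h :: "'a \<Rightarrow> 'k::comm_ring_1 ser" shows "(\<forall>x\<in>set xs. h x \<in> J) \<Longrightarrow> (\<lambda>m. \<Sum>x\<leftarrow>xs. h x m) \<in> J"
proof (induction xs)
  case Nil then show ?case using J_zero by simp
next
  case (Cons x xs)
  then show ?case using J_add[of "h x" "\<lambda>m. \<Sum>x\<leftarrow>xs. h x m"] by simp
qed

lemma Mq_WCQ: "is_comp u \<Longrightarrow> (Mq u :: 'k::comm_ring_1 ser) \<in> WCQSym"
  unfolding WCQSym_def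
  by (intro CollectI exI[of _ "{u}"] exI[of _ "\<lambda>_. 1"]) simp

lemma J_prod:
  assumes "is_comp P" "\<gamma> \<in> C_eps"
  shows "ser_mult (Mq P) (Mq \<gamma>) \<in> (J :: 'k::comm_ring_1 ser set)"
  unfolding ideal_gen_def
  apply (rule CollectI, rule exI[of _ 1], rule exI[of _ "\<lambda>_. Mq P"], rule exI[of _ "\<lambda>_. Mq \<gamma>"])
  using assms Mq_WCQ by simp

lemma J_C:
  assumes "\<gamma> \<in> C_eps"
  shows "(Mq \<gamma> :: 'k::comm_ring_1 ser) \<in> J"
proof -
  have c: "is_comp \<gamma>" using assms by (simp add: C_eps_def)
  have eq: "ser_mult (Mq []) (Mq \<gamma>) = (Mq \<gamma> :: 'k ser)"
    using mult_Mq[OF is_comp_Nil c] by (simp add: Qs_def)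
  have "ser_mult (Mq []) (Mq \<gamma>) \<in> (J :: 'k ser set)" by (rule J_prod[OF is_comp_Nil assms])
  then show ?thesis unfolding eq .
qed



definition pairM :: "ntilde list \<Rightarrow> ntilde list \<Rightarrow> 'k::comm_ring_1 ser" where
  "pairM Q R = (\<lambda>m. Mq (Q @ Eps # R) m + Mq (Q @ R) m)"

definition Hs :: "ntilde list \<Rightarrow> ntilde list \<Rightarrow> ntilde list \<Rightarrow> 'k::comm_ring_1 ser" where
  "Hs Q \<alpha> R = (\<lambda>m. (\<Sum>w\<leftarrow>qsh \<alpha> (Eps#R). Mq (Q@w) m) + (\<Sum>w\<leftarrow>qsh \<alpha> R. Mq (Q@w) m))"

lemma Hs_Nil: "Hs Q [] R = pairM Q R"
  by (simp add: Hs_def pairM_def)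

lemma Hs_Cons:
  assumes "b \<noteq> Num 0"
  shows "(Hs Q (b#\<alpha>) R :: 'k::comm_ring_1 ser) =
     (\<lambda>m. Hs (Q@[b]) \<alpha> R m + (\<Sum>X\<leftarrow>qsh (b#\<alpha>) R. pairM Q X m))"
  using assms by (simp add: Hs_def pairM_def nadd_Eps_right sum_list_addf comp_def add_ac)

lemma Hs_one_J:
  assumes "is_comp (c#\<alpha>)" "is_comp R"
  shows "(Hs [c] \<alpha> R :: 'k::comm_ring_1 ser) \<in> J"
proof -
  have cnz: "c \<noteq> Num 0" using assms by simp
  have cR: "is_comp (Eps#R)" using assms by simp
  have pr: "ser_mult (Mq (c#\<alpha>)) (Mq (Eps#R)) \<in> (J :: 'k ser set)"
    by (rule J_prod[OF assms(1)]) (use cR in \<open>simp add: C_eps_def\<close>)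
  have sJ: "(\<lambda>m. \<Sum>w\<leftarrow>qsh (c#\<alpha>) R. (Mq (Eps#w) m :: 'k)) \<in> J"
  proof (rule J_sum_list, intro ballI)
    fix w assume "w \<in> set (qsh (c#\<alpha>) R)"
    then have "is_comp w" using qsh_comp[OF assms] by blast
    then have "Eps#w \<in> C_eps" by (simp add: C_eps_def)
    then show "(Mq (Eps#w) :: 'k ser) \<in> J" by (rule J_C)
  qed
  have "Hs [c] \<alpha> R = (\<lambda>m. ser_mult (Mq (c#\<alpha>)) (Mq (Eps#R)) m - (\<Sum>w\<leftarrow>qsh (c#\<alpha>) R. (Mq (Eps#w) m :: 'k)))"
    unfolding mult_Mq[OF assms(1) cR] Qs_def
    using cnz by (simp add: Hs_def nadd_Eps_right comp_def)
  then show ?thesis using J_diff[OF pr sJ] by simp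
qed

lemma main_pair:
  "length Q = N \<Longrightarrow> Q \<noteq> [] \<Longrightarrow> is_comp Q \<Longrightarrow> is_comp R \<Longrightarrow> (pairM Q R :: 'k::comm_ring_1 ser) \<in> J"
proof (induction N arbitrary: Q R rule: less_induct)
  case (less N)
  have IH: "\<And>Q' R'. length Q' < N \<Longrightarrow> Q' \<noteq> [] \<Longrightarrow> is_comp Q' \<Longrightarrow> is_comp R' \<Longrightarrow>
      (pairM Q' R' :: 'k ser) \<in> J"
    using less.IH by blast
  have inner: "\<And>Q. length (Q@\<alpha>) = N \<Longrightarrow> Q \<noteq> [] \<Longrightarrow> is_comp (Q@\<alpha>) \<Longrightarrow>
      (Hs Q \<alpha> R :: 'k ser) \<in> J \<Longrightarrow> (pairM (Q@\<alpha>) R :: 'k ser) \<in> J" for \<alpha>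
  proof (induction \<alpha>)
    case Nil then show ?case by (simp add: Hs_Nil)
  next
    case (Cons b \<alpha>')
    have bnz: "b \<noteq> Num 0" using Cons.prems by simp
    have cQ: "is_comp Q" "is_comp (b#\<alpha>')" using Cons.prems by auto
    have sJ: "(\<lambda>m. \<Sum>X\<leftarrow>qsh (b#\<alpha>') R. (pairM Q X m :: 'k)) \<in> J"
    proof (rule J_sum_list, intro ballI)
      fix X assume "X \<in> set (qsh (b#\<alpha>') R)"
      then have "is_comp X" using qsh_comp[OF cQ(2) less.prems(4)] by blast
      moreover have "length Q < N" using Cons.prems(1) by simp
      ultimately show "(pairM Q X :: 'k ser) \<in> J" using IH Cons.prems(2) cQ(1) by blast
    qed
    have "(Hs (Q@[b]) \<alpha>' R :: 'k ser) = (\<lambda>m. Hs Q (b#\<alpha>') R m - (\<Sum>X\<leftarrow>qsh (b#\<alpha>') R. pairM Q X m))"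
      using Hs_Cons[OF bnz, of Q \<alpha>' R, where 'k='k] by (auto simp: fun_eq_iff eq_diff_eq)
    then have "(Hs (Q@[b]) \<alpha>' R :: 'k ser) \<in> J" using J_diff[OF Cons.prems(4) sJ] by simp
    then have "(pairM ((Q@[b])@\<alpha>') R :: 'k ser) \<in> J"
      using Cons.IH[of "Q@[b]"] Cons.prems by simp
    then show ?case by simp
  qed
  obtain c \<alpha> where Q: "Q = c#\<alpha>" using less.prems(2) by (cases Q) auto
  have "(Hs [c] \<alpha> R :: 'k ser) \<in> J" using Hs_one_J less.prems Q by simp
  then have "(pairM ([c]@\<alpha>) R :: 'k ser) \<in> J" using inner[of "[c]" \<alpha>] less.prems Q by simp
  then show ?case using Q by simp
qed

theorem lemma3p10:
  fixes a :: nat and \<alpha>s :: "nat list" and rest :: "ntilde list"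
  assumes kQ: "\<forall>n::nat. n > 0 \<longrightarrow> (\<exists>y::'k::comm_ring_1. of_nat n * y = 1)"
    and a_pos: "a > 0"
    and \<alpha>s_pos: "\<forall>x \<in> set \<alpha>s. x > 0"
    and rest_comp: "is_comp rest"
  shows "ser_add (Mq (Num a # map Num \<alpha>s @ Eps # rest))
                 (Mq (Num a # map Num \<alpha>s @ rest))
         \<in> ideal_gen (WCQSym :: 'k ser set) (Mq ` C_eps)"
proof -
  have cQ: "is_comp (Num a # map Num \<alpha>s)" using a_pos \<alpha>s_pos by (auto simp: is_comp_def)
  have "(pairM (Num a # map Num \<alpha>s) rest :: 'k ser) \<in> J"
    by (rule main_pair[OF refl _ cQ rest_comp]) simp
  then show ?thesis by (simp add: pairM_def ser_add_def)
qed

end
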